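(* Let $T$ be a tree of order $n$. Then $$\frac{n+2\gamma(T)}{3}\le \operatorname{avd}(T)\le\frac{n+2\Gamma(T)}{3}.$$
   Context: A dominating set of a graph $G=(V,E)$ is a set $S\subseteq V$ such that every vertex is in $S$ or adjacent to a vertex of $S$; it is minimal if no proper subset is dominating. $\gamma(T)$ is the minimum size of a dominating set and $\Gamma(T)$ the maximum size of a minimal dominating set. $\operatorname{avd}(T)=\frac{1}{|\mathcal{D}(T)|}\sum_{S\in\mathcal{D}(T)}|S|$ is the average size of a dominating set, where $\mathcal{D}(T)$ is the collection of all dominating sets of $T$. *)

theory Defs
  imports Complex_Main
begin

definition simple_graph :: "'a set \<Rightarrow> ('a \<Rightarrow> 'a \<Rightarrow> bool) \<Rightarrow> bool" where
  "simple_graph V E \<longleftrightarrow> finite V \<and> (\<forall>u v. E u v \<longrightarrow> u \<in> V \<and> v \<in> V)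
     \<and> (\<forall>u v. E u v \<longrightarrow> E v u) \<and> (\<forall>v. \<not> E v v)"

definition connected_graph :: "'a set \<Rightarrow> ('a \<Rightarrow> 'a \<Rightarrow> bool) \<Rightarrow> bool" where
  "connected_graph V E \<longleftrightarrow> V \<noteq> {} \<and> (\<forall>u\<in>V. \<forall>v\<in>V. E\<^sup>*\<^sup>* u v)"

definition is_cycle :: "('a \<Rightarrow> 'a \<Rightarrow> bool) \<Rightarrow> 'a list \<Rightarrow> bool" where
  "is_cycle E cs \<longleftrightarrow> length cs \<ge> 3 \<and> distinct cs
     \<and> (\<forall>i. Suc i < length cs \<longrightarrow> E (cs ! i) (cs ! Suc i))
     \<and> E (last cs) (hd cs)"

definition tree :: "'a set \<Rightarrow> ('a \<Rightarrow> 'a \<Rightarrow> bool) \<Rightarrow> bool" where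
  "tree V E \<longleftrightarrow> simple_graph V E \<and> connected_graph V E \<and> (\<nexists>cs. is_cycle E cs)"

definition dominating :: "'a set \<Rightarrow> ('a \<Rightarrow> 'a \<Rightarrow> bool) \<Rightarrow> 'a set \<Rightarrow> bool" where
  "dominating V E S \<longleftrightarrow> S \<subseteq> V \<and> (\<forall>v\<in>V. v \<in> S \<or> (\<exists>u\<in>S. E u v))"

definition minimal_dominating :: "'a set \<Rightarrow> ('a \<Rightarrow> 'a \<Rightarrow> bool) \<Rightarrow> 'a set \<Rightarrow> bool" where
  "minimal_dominating V E S \<longleftrightarrow> dominating V E S \<and> (\<forall>S'. S' \<subset> S \<longrightarrow> \<not> dominating V E S')"

definition dom_sets :: "'a set \<Rightarrow> ('a \<Rightarrow> 'a \<Rightarrow> bool) \<Rightarrow> 'a set set" where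
  "dom_sets V E = {S. dominating V E S}"

definition domination_number :: "'a set \<Rightarrow> ('a \<Rightarrow> 'a \<Rightarrow> bool) \<Rightarrow> nat" where
  "domination_number V E = Min (card ` dom_sets V E)"

definition upper_domination_number :: "'a set \<Rightarrow> ('a \<Rightarrow> 'a \<Rightarrow> bool) \<Rightarrow> nat" where
  "upper_domination_number V E = Max (card ` {S. minimal_dominating V E S})"

definition avd :: "'a set \<Rightarrow> ('a \<Rightarrow> 'a \<Rightarrow> bool) \<Rightarrow> real" where
  "avd V E = (\<Sum>S\<in>dom_sets V E. real (card S)) / real (card (dom_sets V E))"

end

theory Submission
  imports Defs
begin

definition gpath :: "('a \<Rightarrow> 'a \<Rightarrow> bool) \<Rightarrow> 'a set \<Rightarrow> 'a list \<Rightarrow> bool" where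
  "gpath E W p \<longleftrightarrow> p \<noteq> [] \<and> distinct p \<and> set p \<subseteq> W \<and> (\<forall>i. Suc i < length p \<longrightarrow> E (p ! i) (p ! Suc i))"

lemma leaf_exists:
  assumes acyc: "\<nexists>cs. is_cycle E cs" and irr: "\<forall>v. \<not> E v v"
    and fin: "finite W" and ne: "W \<noteq> {}"
  shows "\<exists>l\<in>W. \<forall>a\<in>W. \<forall>b\<in>W. E l a \<longrightarrow> E l b \<longrightarrow> a = b"
proof (rule ccontr)
  assume "\<not> ?thesis"
  hence two: "\<forall>l\<in>W. \<exists>a\<in>W. \<exists>b\<in>W. E l a \<and> E l b \<and> a \<noteq> b" by blast
  define P where "P k \<longleftrightarrow> (\<exists>p. gpath E W p \<and> length p = k)" for k
  obtain w where w: "w \<in> W" using ne by auto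
  have "P 1" unfolding P_def gpath_def using w by (intro exI[of _ "[w]"]) auto
  moreover have "\<forall>y. P y \<longrightarrow> y \<le> card W"
  proof (intro allI impI)
    fix y assume "P y"
    then obtain p where "gpath E W p" "length p = y" unfolding P_def by auto
    thus "y \<le> card W" unfolding gpath_def
      by (metis card_mono distinct_card fin)
  qed
  ultimately obtain k where Pk: "P k" and kmax: "\<forall>y. P y \<longrightarrow> y \<le> k"
    using Nat.ex_has_greatest_nat[of P 1 "card W"] by blast
  then obtain p where gp: "gpath E W p" and lp: "length p = k" unfolding P_def by auto
  have pne: "p \<noteq> []" and dp: "distinct p" and sp: "set p \<subseteq> W"
    and ep: "\<And>i. Suc i < length p \<Longrightarrow> E (p ! i) (p ! Suc i)" using gp unfolding gpath_def by auto
  have lastW: "last p \<in> W" using pne sp by auto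
  obtain c where cW: "c \<in> W" and ec: "E (last p) c" and cn: "length p \<ge> 2 \<longrightarrow> c \<noteq> p ! (length p - 2)"
  proof -
    obtain a b where "a \<in> W" "b \<in> W" "E (last p) a" "E (last p) b" "a \<noteq> b"
      using two lastW by blast
    thus ?thesis using that by metis
  qed
  show False
  proof (cases "c \<in> set p")
    case False
    have "gpath E W (p @ [c])" unfolding gpath_def
    proof (intro conjI allI impI)
      show "distinct (p @ [c])" using dp False by simp
      show "set (p @ [c]) \<subseteq> W" using sp cW by simp
      fix i assume i: "Suc i < length (p @ [c])"
      show "E ((p @ [c]) ! i) ((p @ [c]) ! Suc i)"
      proof (cases "Suc i < length p")
        case True thus ?thesis using ep by (simp add: nth_append)
      next
        case False
        hence "i = length p - 1" "Suc i = length p" using i pne by auto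
        thus ?thesis using ec pne by (simp add: nth_append last_conv_nth)
      qed
    qed simp
    hence "P (Suc k)" unfolding P_def using lp by (intro exI[of _ "p @ [c]"]) simp
    thus False using kmax by fastforce
  next
    case True
    then obtain j where j: "j < length p" "p ! j = c" by (meson in_set_conv_nth)
    have "j \<noteq> length p - 1" using irr ec j pne by (metis last_conv_nth)
    moreover have "j \<noteq> length p - 2"
    proof
      assume "j = length p - 2"
      moreover have "length p \<ge> 2" using j \<open>j \<noteq> length p - 1\<close> by linarith
      ultimately show False using cn j by simp
    qed
    ultimately have j3: "j + 3 \<le> length p" using j by linarith
    have "is_cycle E (drop j p)" unfolding is_cycle_def
    proof (intro conjI allI impI)
      show "3 \<le> length (drop j p)" using j3 by simp
      show "distinct (drop j p)" using dp by simp
      fix i assume "Suc i < length (drop j p)"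
      thus "E (drop j p ! i) (drop j p ! Suc i)" using ep by simp
    next
      have "last (drop j p) = last p" using j by simp
      moreover have "hd (drop j p) = c" using j by (simp add: hd_drop_conv_nth)
      ultimately show "E (last (drop j p)) (hd (drop j p))" using ec by simp
    qed
    thus False using acyc by blast
  qed
qed

lemma bip_coloring:
  assumes acyc: "\<nexists>cs. is_cycle E cs" and irr: "\<forall>v. \<not> E v v"
    and sym: "\<forall>u v. E u v \<longrightarrow> E v u" and fin: "finite W"
  shows "\<exists>col::'a \<Rightarrow> bool. \<forall>x\<in>W. \<forall>y\<in>W. E x y \<longrightarrow> col x \<noteq> col y"
  using fin
proof (induct W rule: finite_psubset_induct)
  case (psubset W)
  show ?case
  proof (cases "W = {}")
    case True thus ?thesis by auto
  next
    case False
    obtain l where lW: "l \<in> W" and leaf: "\<forall>a\<in>W. \<forall>b\<in>W. E l a \<longrightarrow> E l b \<longrightarrow> a = b"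
      using leaf_exists[OF acyc irr psubset(1) False] by blast
    have sub: "W - {l} \<subset> W" using lW by auto
    from psubset(2)[OF sub] obtain col' :: "'a \<Rightarrow> bool" where col': "\<forall>x\<in>W-{l}. \<forall>y\<in>W-{l}. E x y \<longrightarrow> col' x \<noteq> col' y"
      by blast
    show ?thesis
    proof (cases "\<exists>a\<in>W. E l a")
      case True
      then obtain a where aW: "a \<in> W" and la: "E l a" by blast
      have al: "a \<noteq> l" using la irr by auto
      show ?thesis
      proof (intro exI[of _ "col'(l := \<not> col' a)"] ballI impI)
        fix x y assume xW: "x \<in> W" and yW: "y \<in> W" and xy: "E x y"
        show "(col'(l := \<not> col' a)) x \<noteq> (col'(l := \<not> col' a)) y"
        proof (cases "x = l")
          case True
          hence "E l y" using xy by simp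
          hence "y = a" using leaf aW la yW by blast
          thus ?thesis using True al by simp
        next
          case xl: False
          show ?thesis
          proof (cases "y = l")
            case True
            hence "E l x" using xy sym by blast
            hence "x = a" using leaf aW la xW by blast
            thus ?thesis using True al by simp
          next
            case False
            thus ?thesis using xl col' xW yW xy by auto
          qed
        qed
      qed
    next
      case False
      show ?thesis
      proof (intro exI[of _ col'] ballI impI)
        fix x y assume xW: "x \<in> W" and yW: "y \<in> W" and xy: "E x y"
        have "x \<noteq> l" using False xy yW by auto
        moreover have "y \<noteq> l" using False xy xW sym by auto
        ultimately show "col' x \<noteq> col' y" using col' xW yW xy by auto
      qed
    qed
  qed
qed

definition NS :: "('a \<Rightarrow> 'a \<Rightarrow> bool) \<Rightarrow> 'a set \<Rightarrow> 'a set \<Rightarrow> 'a \<Rightarrow> 'a set" where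
  "NS E W S w = {z \<in> W \<inter> S. z = w \<or> E w z}"

definition goodc :: "('a \<Rightarrow> 'a \<Rightarrow> bool) \<Rightarrow> 'a set \<Rightarrow> 'a set \<Rightarrow> ('a \<Rightarrow> bool) \<Rightarrow> bool" where
  "goodc E W S c \<longleftrightarrow> (\<forall>w\<in>W. \<forall>x\<in>NS E W S w. \<forall>y\<in>NS E W S w. x \<noteq> y \<longrightarrow>
      (\<exists>a\<in>NS E W S w. \<exists>b\<in>NS E W S w. c a \<noteq> c b))"

lemma NS_same:
  assumes "w \<noteq> l" "\<not> E w l"
  shows "NS E W S w = NS E (W - {l}) S w"
  using assms unfolding NS_def by auto

lemma NS_notS:
  assumes "l \<notin> S"
  shows "NS E W S w = NS E (W - {l}) S w"
  using assms unfolding NS_def by auto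


lemma s_coloring:
  assumes acyc: "\<nexists>cs. is_cycle E cs" and irr: "\<forall>v. \<not> E v v"
    and sym: "\<forall>u v. E u v \<longrightarrow> E v u" and fin: "finite W"
  shows "\<exists>c::'a \<Rightarrow> bool. goodc E W S c"
  using fin
proof (induct W rule: finite_psubset_induct)
  case (psubset W)
  show ?case
  proof (cases "W = {}")
    case True thus ?thesis unfolding goodc_def by auto
  next
    case False
    obtain l where lW: "l \<in> W" and leaf: "\<forall>a\<in>W. \<forall>b\<in>W. E l a \<longrightarrow> E l b \<longrightarrow> a = b"
      using leaf_exists[OF acyc irr psubset(1) False] by blast
    define W' where "W' = W - {l}"
    have sub: "W' \<subset> W" using lW unfolding W'_def by auto
    from psubset(2)[OF sub] obtain c' :: "'a \<Rightarrow> bool" where c': "goodc E W' S c'"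
      by blast
    have c'w: "\<And>w x y. w \<in> W' \<Longrightarrow> x \<in> NS E W' S w \<Longrightarrow> y \<in> NS E W' S w \<Longrightarrow> x \<noteq> y \<Longrightarrow>
      (\<exists>a\<in>NS E W' S w. \<exists>b\<in>NS E W' S w. c' a \<noteq> c' b)"
      using c' unfolding goodc_def by blast
    have lW': "l \<notin> W'" unfolding W'_def by simp
    have lNS': "\<And>w. l \<notin> NS E W' S w" using lW' unfolding NS_def by auto
    have keep: "\<And>v w x y. w \<in> W \<Longrightarrow> w \<noteq> l \<Longrightarrow> \<not> E w l \<Longrightarrow> x \<in> NS E W S w \<Longrightarrow> y \<in> NS E W S w \<Longrightarrow> x \<noteq> y \<Longrightarrow>
      (\<exists>a\<in>NS E W S w. \<exists>b\<in>NS E W S w. (c'(l := v)) a \<noteq> (c'(l := v)) b)"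
    proof -
      fix v w x y assume a: "w \<in> W" "w \<noteq> l" "\<not> E w l" "x \<in> NS E W S w" "y \<in> NS E W S w" "x \<noteq> y"
      have eq: "NS E W S w = NS E W' S w" using NS_same[of w l E W S, OF a(2,3)] unfolding W'_def by simp
      have "w \<in> W'" using a unfolding W'_def by simp
      then obtain p q where "p \<in> NS E W' S w" "q \<in> NS E W' S w" "c' p \<noteq> c' q"
        using c'w a eq by metis
      moreover have "p \<noteq> l" "q \<noteq> l" using calculation lNS' by metis+
      ultimately show "\<exists>a\<in>NS E W S w. \<exists>b\<in>NS E W S w. (c'(l := v)) a \<noteq> (c'(l := v)) b"
        using eq by fastforce
    qed
    show ?thesis
    proof (cases "l \<in> S")
      case False
      show ?thesis unfolding goodc_def
      proof (intro exI[of _ "c'(l := True)"] ballI impI)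
        fix w x y assume w: "w \<in> W" and x: "x \<in> NS E W S w" and y: "y \<in> NS E W S w" and xy: "x \<noteq> y"
        show "\<exists>a\<in>NS E W S w. \<exists>b\<in>NS E W S w. (c'(l := True)) a \<noteq> (c'(l := True)) b"
        proof (cases "w = l")
          case True
          have "x \<noteq> l" "y \<noteq> l" using x y False unfolding NS_def by auto
          hence "E l x" "E l y" "x \<in> W" "y \<in> W" using x y True unfolding NS_def by auto
          hence "x = y" using leaf by blast
          thus ?thesis using xy by simp
        next
          case wl: False
          have eq: "NS E W S w = NS E W' S w" using NS_notS[OF False] unfolding W'_def by simp
          have "w \<in> W'" using w wl unfolding W'_def by simp
          then obtain p q where "p \<in> NS E W' S w" "q \<in> NS E W' S w" "c' p \<noteq> c' q"
            using c'w x y xy eq by metis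
          moreover have "p \<noteq> l" "q \<noteq> l" using calculation lNS' by metis+
          ultimately show ?thesis using eq by fastforce
        qed
      qed
    next
      case lS: True
      show ?thesis
      proof (cases "\<exists>s\<in>W. E l s")
        case False
        show ?thesis unfolding goodc_def
        proof (intro exI[of _ "c'(l := True)"] ballI impI)
          fix w x y assume w: "w \<in> W" and x: "x \<in> NS E W S w" and y: "y \<in> NS E W S w" and xy: "x \<noteq> y"
          show "\<exists>a\<in>NS E W S w. \<exists>b\<in>NS E W S w. (c'(l := True)) a \<noteq> (c'(l := True)) b"
          proof (cases "w = l")
            case True
            have "x = l" "y = l" using x y False True unfolding NS_def by auto
            thus ?thesis using xy by simp
          next
            case wl: False
            have "\<not> E w l" using False w sym by blast
            thus ?thesis using keep[OF w wl _ x y xy] by blast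
          qed
        qed
      next
        case True
        then obtain s where sW: "s \<in> W" and ls: "E l s" by blast
        have sl: "s \<noteq> l" using ls irr by auto
        have onlys: "\<And>w. w \<in> W \<Longrightarrow> E w l \<Longrightarrow> w = s" using leaf sW ls sym by blast
        obtain t where tdef: "(s \<in> S \<and> t = s) \<or> (s \<notin> S \<and> t \<in> W' \<and> t \<in> S \<and> E s t) \<or>
            (s \<notin> S \<and> \<not> (\<exists>x\<in>W'. x \<in> S \<and> E s x) \<and> t = l)"
          by blast
        show ?thesis unfolding goodc_def
        proof (intro exI[of _ "c'(l := \<not> c' t)"] ballI impI)
          fix w x y assume w: "w \<in> W" and x: "x \<in> NS E W S w" and y: "y \<in> NS E W S w" and xy: "x \<noteq> y"
          show "\<exists>a\<in>NS E W S w. \<exists>b\<in>NS E W S w. (c'(l := \<not> c' t)) a \<noteq> (c'(l := \<not> c' t)) b"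
          proof (cases "w = l")
            case wl: True
            have xs: "x = l \<or> x = s" using x wl leaf sW ls unfolding NS_def by auto
            have ys: "y = l \<or> y = s" using y wl leaf sW ls unfolding NS_def by auto
            have sS: "s \<in> S" using xs ys xy x y unfolding NS_def by auto
            have "l \<in> NS E W S w" "s \<in> NS E W S w" using wl lW lS sW sS ls unfolding NS_def by auto
            moreover have "t = s" using tdef sS by auto
            ultimately show ?thesis using sl by (intro bexI[of _ l] bexI[of _ s]) auto
          next
            case wl: False
            show ?thesis
            proof (cases "w = s")
              case ws: True
              have lin: "l \<in> NS E W S w" using ws lW lS ls sym unfolding NS_def by auto
              show ?thesis
              proof (cases "t = l")
                case False
                have "t \<in> NS E W S w" using tdef False ws sW unfolding NS_def W'_def by auto
                thus ?thesis using lin False by (intro bexI[of _ l] bexI[of _ t]) auto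
              next
                case True
                have sS: "s \<notin> S" and none: "\<not> (\<exists>x\<in>W'. x \<in> S \<and> E s x)"
                  using tdef True sl lW' by auto
                have "x = l" "y = l" using x y ws sS none unfolding NS_def W'_def by auto
                thus ?thesis using xy by simp
              qed
            next
              case False
              have "\<not> E w l" using onlys w False by blast
              thus ?thesis using keep[OF w wl _ x y xy] by blast
            qed
          qed
        qed
      qed
    qed
  qed
qed

definition rem :: "'a set \<Rightarrow> ('a \<Rightarrow> 'a \<Rightarrow> bool) \<Rightarrow> 'a set \<Rightarrow> 'a set" where
  "rem V E S = {v \<in> S. dominating V E (S - {v})}"

lemma finite_dom_sets: "finite V \<Longrightarrow> finite (dom_sets V E)"
  unfolding dom_sets_def dominating_def
  by (rule finite_subset[of _ "Pow V"]) auto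

lemma gamma_le: assumes "finite V" "dominating V E D"
  shows "domination_number V E \<le> card D"
  unfolding domination_number_def
  using assms finite_dom_sets[OF assms(1)] by (intro Min_le) (auto simp: dom_sets_def)

lemma A_pt:
  assumes sg: "simple_graph V E" and acyc: "\<nexists>cs. is_cycle E cs" and dS: "dominating V E S"
  shows "2 * domination_number V E + card (rem V E S) \<le> 2 * card S"
proof -
  have finV: "finite V" and irr: "\<forall>v. \<not> E v v" and sym: "\<forall>u v. E u v \<longrightarrow> E v u"
    and inV: "\<forall>u v. E u v \<longrightarrow> u \<in> V \<and> v \<in> V"
    using sg unfolding simple_graph_def by auto
  have SV: "S \<subseteq> V" using dS unfolding dominating_def by auto
  have finS: "finite S" using SV finV finite_subset by auto
  obtain c :: "'a \<Rightarrow> bool" where gc: "goodc E V S c" using s_coloring[OF acyc irr sym finV] by blast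
  define R where "R = rem V E S"
  have RS: "R \<subseteq> S" unfolding R_def rem_def by auto
  have key: "dominating V E (S - X)" if XR: "X \<subseteq> R" and cX: "\<forall>x\<in>X. \<forall>y\<in>X. c x = c y" for X
    unfolding dominating_def
  proof (intro conjI ballI)
    show "S - X \<subseteq> V" using SV by auto
    fix w assume wV: "w \<in> V"
    show "w \<in> S - X \<or> (\<exists>u\<in>S - X. E u w)"
    proof (rule ccontr)
      assume nd: "\<not> ?thesis"
      have allX: "z \<in> X" if zN: "z \<in> NS E V S w" for z
      proof (rule ccontr)
        assume zX: "z \<notin> X"
        have zS: "z \<in> S" and zw: "z = w \<or> E w z" using zN unfolding NS_def by auto
        show False
        proof (cases "z = w")
          case True thus False using nd zS zX by blast
        next
          case False
          hence "E z w" using zw sym by blast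
          thus False using nd zS zX by blast
        qed
      qed
      have nbr: "\<exists>z. z \<in> NS E V S' w \<and> z \<in> S'" if dS': "dominating V E S'" for S'
      proof -
        have "w \<in> S' \<or> (\<exists>u\<in>S'. E u w)" using dS' wV unfolding dominating_def by blast
        thus ?thesis
        proof
          assume "w \<in> S'" thus ?thesis using wV unfolding NS_def by blast
        next
          assume "\<exists>u\<in>S'. E u w"
          then obtain u where "u \<in> S'" "E u w" by blast
          moreover have "E w u" "u \<in> V" using calculation(2) sym inV by blast+
          ultimately show ?thesis unfolding NS_def by blast
        qed
      qed
      obtain z where z: "z \<in> NS E V S w" using nbr[OF dS] by blast
      have "z \<in> R" using allX z XR by auto
      hence "dominating V E (S - {z})" unfolding R_def rem_def by auto
      then obtain y where y0: "y \<in> NS E V (S - {z}) w" "y \<in> S - {z}" using nbr by blast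
      have y: "y \<in> NS E V S w" "y \<noteq> z" using y0 unfolding NS_def by auto
      then obtain a b where "a \<in> NS E V S w" "b \<in> NS E V S w" "c a \<noteq> c b"
        using gc wV z unfolding goodc_def by metis
      thus False using allX cX by blast
    qed
  qed
  define X0 where "X0 = {v \<in> R. c v}"
  define X1 where "X1 = {v \<in> R. \<not> c v}"
  have finR: "finite R" using RS finS finite_subset by auto
  have cardR: "card R = card X0 + card X1"
  proof -
    have "R = X0 \<union> X1" "X0 \<inter> X1 = {}" unfolding X0_def X1_def by auto
    moreover have "finite X0" "finite X1" using finR unfolding X0_def X1_def by auto
    ultimately show ?thesis using card_Un_disjoint by metis
  qed
  have bound: "2 * domination_number V E + 2 * card X \<le> 2 * card S"
    if "X \<subseteq> R" "\<forall>x\<in>X. \<forall>y\<in>X. c x = c y" for X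
  proof -
    have "domination_number V E \<le> card (S - X)" using gamma_le[OF finV key[OF that]] .
    moreover have "card (S - X) = card S - card X" using that(1) RS finS
      by (meson card_Diff_subset finite_subset order_trans)
    moreover have "card X \<le> card S" using that(1) RS finS by (meson card_mono order_trans)
    ultimately show ?thesis by linarith
  qed
  have b0: "2 * domination_number V E + 2 * card X0 \<le> 2 * card S"
    by (rule bound) (auto simp: X0_def)
  have b1: "2 * domination_number V E + 2 * card X1 \<le> 2 * card S"
    by (rule bound) (auto simp: X1_def)
  show ?thesis using b0 b1 cardR unfolding R_def by linarith
qed

definition indep :: "('a \<Rightarrow> 'a \<Rightarrow> bool) \<Rightarrow> 'a set \<Rightarrow> bool" where
  "indep E J \<longleftrightarrow> (\<forall>x\<in>J. \<forall>y\<in>J. \<not> E x y)"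

lemma indep_le_Gamma:
  assumes sg: "simple_graph V E" and IV: "I \<subseteq> V" and iI: "indep E I"
  shows "card I \<le> upper_domination_number V E"
proof -
  have finV: "finite V" and irr: "\<forall>v. \<not> E v v" and sym: "\<forall>u v. E u v \<longrightarrow> E v u"
    using sg unfolding simple_graph_def by auto
  define P where "P k \<longleftrightarrow> (\<exists>J. I \<subseteq> J \<and> J \<subseteq> V \<and> indep E J \<and> card J = k)" for k
  have "P (card I)" unfolding P_def using IV iI by blast
  moreover have "\<forall>y. P y \<longrightarrow> y \<le> card V" unfolding P_def using finV card_mono by blast
  ultimately obtain k where Pk: "P k" and kmax: "\<forall>y. P y \<longrightarrow> y \<le> k"
    using Nat.ex_has_greatest_nat[of P "card I" "card V"] by blast
  then obtain J where IJ: "I \<subseteq> J" and JV: "J \<subseteq> V" and iJ: "indep E J" and cJ: "card J = k"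
    unfolding P_def by blast
  have finJ: "finite J" using JV finV finite_subset by auto
  have domJ: "dominating V E J" unfolding dominating_def
  proof (intro conjI ballI)
    show "J \<subseteq> V" by (rule JV)
    fix v assume vV: "v \<in> V"
    show "v \<in> J \<or> (\<exists>u\<in>J. E u v)"
    proof (rule ccontr)
      assume nd: "\<not> ?thesis"
      have "indep E (insert v J)" unfolding indep_def
      proof (intro ballI)
        fix x y assume x: "x \<in> insert v J" and y: "y \<in> insert v J"
        show "\<not> E x y"
        proof
          assume exy: "E x y"
          show False
          proof (cases "x = v")
            case True
            thus False using y exy irr nd sym by blast
          next
            case False
            hence xJ: "x \<in> J" using x by blast
            show False
            proof (cases "y = v")
              case True thus False using xJ exy nd by blast
            next
              case False thus False using xJ y exy iJ unfolding indep_def by blast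
            qed
          qed
        qed
      qed
      hence "P (card (insert v J))" unfolding P_def using IJ JV vV by blast
      moreover have "card (insert v J) = Suc k" using nd finJ cJ by simp
      ultimately show False using kmax by fastforce
    qed
  qed
  have minJ: "minimal_dominating V E J" unfolding minimal_dominating_def
  proof (intro conjI allI impI)
    show "dominating V E J" by (rule domJ)
    fix S' assume S'J: "S' \<subset> J"
    show "\<not> dominating V E S'"
    proof
      assume dS': "dominating V E S'"
      obtain v where v: "v \<in> J" "v \<notin> S'" using S'J by blast
      then obtain u where "u \<in> S'" "E u v" using dS' JV unfolding dominating_def by blast
      thus False using iJ v S'J unfolding indep_def by blast
    qed
  qed
  have finM: "finite {S. minimal_dominating V E S}"
    by (rule finite_subset[of _ "Pow V"]) (auto simp: minimal_dominating_def dominating_def finV)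
  have "card J \<le> upper_domination_number V E"
    unfolding upper_domination_number_def using finM minJ by (intro Max_ge) auto
  moreover have "card I \<le> card J" using IJ finJ card_mono by blast
  ultimately show ?thesis by linarith
qed

lemma B_pt:
  assumes sg: "simple_graph V E" and acyc: "\<nexists>cs. is_cycle E cs" and dS: "dominating V E S"
  shows "2 * card S \<le> 2 * upper_domination_number V E + card (rem V E S)"
proof -
  have finV: "finite V" and irr: "\<forall>v. \<not> E v v" and sym: "\<forall>u v. E u v \<longrightarrow> E v u"
    and inV: "\<forall>u v. E u v \<longrightarrow> u \<in> V \<and> v \<in> V"
    using sg unfolding simple_graph_def by auto
  have SV: "S \<subseteq> V" using dS unfolding dominating_def by auto
  have finS: "finite S" using SV finV finite_subset by auto
  obtain col :: "'a \<Rightarrow> bool" where col: "\<forall>x\<in>V. \<forall>y\<in>V. E x y \<longrightarrow> col x \<noteq> col y"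
    using bip_coloring[OF acyc irr sym finV] by blast
  define R where "R = rem V E S"
  define U where "U = S - R"
  define U1 where "U1 = {u \<in> U. \<not> (\<exists>x\<in>S. E x u)}"
  define U2 where "U2 = U - U1"
  have RS: "R \<subseteq> S" unfolding R_def rem_def by auto
  have priv: "\<exists>p. p \<in> V \<and> p \<notin> S \<and> E u p \<and> (\<forall>y\<in>S. E y p \<longrightarrow> y = u)" if uU2: "u \<in> U2" for u
  proof -
    have uS: "u \<in> S" and uR: "u \<notin> R" and uU1: "u \<notin> U1" using uU2 unfolding U2_def U_def by auto
    have "\<not> dominating V E (S - {u})" using uR uS unfolding R_def rem_def by auto
    moreover have "S - {u} \<subseteq> V" using SV by auto
    ultimately obtain w where wV: "w \<in> V" and w1: "w \<notin> S - {u}" and w2: "\<not> (\<exists>y\<in>S - {u}. E y w)"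
      unfolding dominating_def by blast
    have "w \<noteq> u"
    proof
      assume "w = u"
      hence "\<not> (\<exists>x\<in>S. E x u)" using w2 irr by blast
      thus False using uU1 uS uR unfolding U1_def U_def by blast
    qed
    hence wS: "w \<notin> S" using w1 by blast
    obtain y where "y \<in> S" "E y w" using dS wV wS unfolding dominating_def by blast
    hence "y = u" using w2 by blast
    hence "E u w" using \<open>E y w\<close> by simp
    thus ?thesis using wV wS w2 by blast
  qed
  then obtain pf where pf: "\<And>u. u \<in> U2 \<Longrightarrow> pf u \<in> V \<and> pf u \<notin> S \<and> E u (pf u) \<and> (\<forall>y\<in>S. E y (pf u) \<longrightarrow> y = u)"
    by metis
  have injp: "inj_on pf U2"
  proof (rule inj_onI)
    fix u u' assume u: "u \<in> U2" and u': "u' \<in> U2" and eq: "pf u = pf u'"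
    have "u' \<in> S" using u' unfolding U2_def U_def by auto
    moreover have "E u' (pf u)" using pf[OF u'] eq by simp
    ultimately show "u = u'" using pf[OF u] by blast
  qed
  define W where "W = (S - U1) \<union> pf ` U2"
  have U2S: "U2 \<subseteq> S" and U1S: "U1 \<subseteq> S" unfolding U2_def U1_def U_def by auto
  have finU2: "finite U2" using U2S finS finite_subset by auto
  have pfS: "pf ` U2 \<inter> S = {}" using pf by blast
  have WV: "W \<subseteq> V" unfolding W_def using SV pf by blast
  have finW: "finite W" using WV finV finite_subset by auto
  have cardW: "card W = card (S - U1) + card U2"
  proof -
    have "card W = card (S - U1) + card (pf ` U2)" unfolding W_def
      using pfS finS finU2 by (intro card_Un_disjoint) auto
    thus ?thesis using card_image[OF injp] by simp
  qed
  define C0 where "C0 = {x \<in> W. col x}"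
  define C1 where "C1 = {x \<in> W. \<not> col x}"
  have cardC: "card W = card C0 + card C1"
  proof -
    have "W = C0 \<union> C1" "C0 \<inter> C1 = {}" unfolding C0_def C1_def by auto
    moreover have "finite C0" "finite C1" using finW unfolding C0_def C1_def by auto
    ultimately show ?thesis using card_Un_disjoint by metis
  qed
  have bound: "2 * card S \<le> 2 * upper_domination_number V E + card R"
    if CW: "C \<subseteq> W" and cC: "\<forall>x\<in>C. \<forall>y\<in>C. col x = col y" and big: "card W \<le> 2 * card C" for C
  proof -
    define I where "I = U1 \<union> C"
    have U1W: "U1 \<inter> W = {}" unfolding W_def using pfS U1S by blast
    have IV: "I \<subseteq> V" unfolding I_def using U1S SV CW WV by blast
    have noS: "\<And>u x. u \<in> U1 \<Longrightarrow> x \<in> S \<Longrightarrow> \<not> E x u" unfolding U1_def by blast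
    have noU1C: "\<not> E x y \<and> \<not> E y x" if x: "x \<in> U1" and y: "y \<in> C" for x y
    proof -
      have yW: "y \<in> W" using y CW by blast
      have xS: "x \<in> S" using x U1S by blast
      show ?thesis
      proof (cases "y \<in> S")
        case True
        thus ?thesis using noS[OF x] sym by blast
      next
        case False
        then obtain u' where u': "u' \<in> U2" "y = pf u'" using yW unfolding W_def by blast
        have "\<not> E x y"
        proof
          assume "E x y"
          hence "x = u'" using pf[OF u'(1)] xS u'(2) by blast
          thus False using x u'(1) unfolding U2_def by blast
        qed
        thus ?thesis using sym by blast
      qed
    qed
    have iI: "indep E I" unfolding indep_def
    proof (intro ballI notI)
      fix x y assume x: "x \<in> I" and y: "y \<in> I" and exy: "E x y"
      show False
      proof (cases "x \<in> U1")
        case xU1: True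
        show False
        proof (cases "y \<in> U1")
          case True thus False using noS[OF True] xU1 U1S exy by blast
        next
          case False thus False using y noU1C[OF xU1] exy unfolding I_def by blast
        qed
      next
        case xU1: False
        hence xC: "x \<in> C" using x unfolding I_def by blast
        show False
        proof (cases "y \<in> U1")
          case True thus False using noU1C[OF True xC] exy by blast
        next
          case False
          hence "y \<in> C" using y unfolding I_def by blast
          thus False using xC cC col CW WV exy by blast
        qed
      qed
    qed
    have finC: "finite C" using CW finW finite_subset by auto
    have finU1: "finite U1" using U1S finS finite_subset by auto
    have cardI: "card I = card U1 + card C" unfolding I_def
      using U1W CW finC finU1 by (intro card_Un_disjoint) auto
    have "card I \<le> upper_domination_number V E" by (rule indep_le_Gamma[OF sg IV iI])
    moreover have "card S = card U1 + card (S - U1)"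
      using card_Diff_subset[OF finU1 U1S] card_mono[OF finS U1S] by linarith
    moreover have "card U = card U1 + card U2"
    proof -
      have U1U: "U1 \<subseteq> U" unfolding U1_def by blast
      have finU: "finite U" unfolding U_def using finS by blast
      show ?thesis unfolding U2_def
        using card_Diff_subset[OF finU1 U1U] card_mono[OF finU U1U] by linarith
    qed
    moreover have "card S = card R + card U"
    proof -
      have finR: "finite R" using RS finS finite_subset by blast
      show ?thesis unfolding U_def
        using card_Diff_subset[OF finR RS] card_mono[OF finS RS] by linarith
    qed
    ultimately show ?thesis using cardW big cardI by linarith
  qed
  show ?thesis
  proof (cases "card W \<le> 2 * card C0")
    case True
    show ?thesis unfolding R_def[symmetric] by (rule bound[OF _ _ True]) (auto simp: C0_def)
  next
    case False
    hence "card W \<le> 2 * card C1" using cardC by linarith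
    thus ?thesis unfolding R_def[symmetric] by (intro bound[of C1]) (auto simp: C1_def)
  qed
qed

lemma dom_insert: "dominating V E S \<Longrightarrow> v \<in> V \<Longrightarrow> dominating V E (insert v S)"
  unfolding dominating_def by blast

lemma count_eq:
  assumes finV: "finite V"
  shows "(\<Sum>S\<in>dom_sets V E. card (V - S)) = (\<Sum>S\<in>dom_sets V E. card (rem V E S))"
proof -
  define D where "D = dom_sets V E"
  have finD: "finite D" unfolding D_def using finite_dom_sets[OF finV] .
  have SV: "\<And>S. S \<in> D \<Longrightarrow> S \<subseteq> V" unfolding D_def dom_sets_def dominating_def by auto
  have l: "(\<Sum>S\<in>D. card (V - S)) = card (SIGMA S:D. V - S)"
    using finD finV by (subst card_SigmaI) auto
  have r: "(\<Sum>S\<in>D. card (rem V E S)) = card (SIGMA S:D. rem V E S)"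
  proof -
    have "\<And>S. S \<in> D \<Longrightarrow> finite (rem V E S)"
    proof -
      fix S assume "S \<in> D"
      hence "rem V E S \<subseteq> V" using SV unfolding rem_def by auto
      thus "finite (rem V E S)" using finV finite_subset by auto
    qed
    thus ?thesis using finD by (subst card_SigmaI) auto
  qed
  define f where "f = (\<lambda>(S::'a set, v::'a). (insert v S, v))"
  have inj: "inj_on f (SIGMA S:D. V - S)"
  proof (rule inj_onI)
    fix p q assume p: "p \<in> (SIGMA S:D. V - S)" and q: "q \<in> (SIGMA S:D. V - S)" and fpq: "f p = f q"
    obtain S v where pS: "p = (S, v)" "v \<notin> S" using p by auto
    obtain S' v' where qS: "q = (S', v')" "v' \<notin> S'" using q by auto
    have "v = v'" "insert v S = insert v' S'" using fpq pS qS unfolding f_def by auto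
    hence "S = S'" using pS(2) qS(2) by (metis Diff_insert_absorb)
    thus "p = q" using pS qS \<open>v = v'\<close> by simp
  qed
  have img: "f ` (SIGMA S:D. V - S) = (SIGMA S:D. rem V E S)"
  proof
    show "f ` (SIGMA S:D. V - S) \<subseteq> (SIGMA S:D. rem V E S)"
    proof
      fix x assume "x \<in> f ` (SIGMA S:D. V - S)"
      then obtain S v where S: "S \<in> D" and v: "v \<in> V" "v \<notin> S" and x: "x = (insert v S, v)"
        unfolding f_def by auto
      have "insert v S \<in> D" using S v dom_insert unfolding D_def dom_sets_def by auto
      moreover have "insert v S - {v} = S" using v by auto
      ultimately show "x \<in> (SIGMA S:D. rem V E S)" using x S unfolding rem_def D_def dom_sets_def by auto
    qed
  next
    show "(SIGMA S:D. rem V E S) \<subseteq> f ` (SIGMA S:D. V - S)"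
    proof
      fix x assume "x \<in> (SIGMA S:D. rem V E S)"
      then obtain T v where T: "T \<in> D" and v: "v \<in> T" "dominating V E (T - {v})" and x: "x = (T, v)"
        unfolding rem_def by auto
      have "T - {v} \<in> D" using v unfolding D_def dom_sets_def by auto
      moreover have "v \<in> V - (T - {v})" using v T SV by auto
      moreover have "f (T - {v}, v) = x" using x v unfolding f_def by auto
      ultimately show "x \<in> f ` (SIGMA S:D. V - S)" by force
    qed
  qed
  show ?thesis using l r card_image[OF inj] img unfolding D_def by simp
qed

theorem theorem5p1:
  fixes V :: "'a set" and E :: "'a \<Rightarrow> 'a \<Rightarrow> bool" and n :: nat
  assumes "tree V E" and "card V = n"
  shows "(real n + 2 * real (domination_number V E)) / 3 \<le> avd V E
       \<and> avd V E \<le> (real n + 2 * real (upper_domination_number V E)) / 3"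
proof -
  have sg: "simple_graph V E" and acyc: "\<nexists>cs. is_cycle E cs" using assms(1) unfolding tree_def by auto
  have finV: "finite V" using sg unfolding simple_graph_def by auto
  define D where "D = dom_sets V E"
  define g where "g = real (domination_number V E)"
  define G where "G = real (upper_domination_number V E)"
  have finD: "finite D" unfolding D_def using finite_dom_sets[OF finV] .
  have VD: "V \<in> D" unfolding D_def dom_sets_def dominating_def by auto
  have Npos: "real (card D) > 0" using finD VD card_gt_0_iff by fastforce
  have SV: "\<And>S. S \<in> D \<Longrightarrow> S \<subseteq> V" unfolding D_def dom_sets_def dominating_def by auto
  have dS: "\<And>S. S \<in> D \<Longrightarrow> dominating V E S" unfolding D_def dom_sets_def by auto
  define sz where "sz = (\<Sum>S\<in>D. real (card S))"
  define rr where "rr = (\<Sum>S\<in>D. real (card (rem V E S)))"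
  have avd_eq: "avd V E = sz / real (card D)" unfolding avd_def sz_def D_def by simp
  have cnt: "real n * real (card D) - sz = rr"
  proof -
    have "(\<Sum>S\<in>D. real (card (V - S))) = rr"
      unfolding rr_def D_def using count_eq[OF finV, of E] by (metis of_nat_sum)
    moreover have "(\<Sum>S\<in>D. real (card (V - S))) = (\<Sum>S\<in>D. real n - real (card S))"
    proof (rule sum.cong)
      fix S assume "S \<in> D"
      hence "card (V - S) = card V - card S" "card S \<le> card V"
        using SV finV by (meson card_Diff_subset finite_subset card_mono)+
      thus "real (card (V - S)) = real n - real (card S)" using assms(2) by simp
    qed simp
    moreover have "(\<Sum>S\<in>D. real n - real (card S)) = real n * real (card D) - sz"
      unfolding sz_def by (simp add: sum_subtractf)
    ultimately show ?thesis by simp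
  qed
  have low: "2 * g * real (card D) + rr \<le> 2 * sz"
  proof -
    have "(\<Sum>S\<in>D. 2 * g + real (card (rem V E S))) \<le> (\<Sum>S\<in>D. 2 * real (card S))"
    proof (rule sum_mono)
      fix S assume "S \<in> D"
      hence "2 * domination_number V E + card (rem V E S) \<le> 2 * card S" using A_pt[OF sg acyc dS] by blast
      thus "2 * g + real (card (rem V E S)) \<le> 2 * real (card S)" unfolding g_def by linarith
    qed
    thus ?thesis unfolding rr_def sz_def by (simp add: sum.distrib sum_distrib_left mult.commute)
  qed
  have up: "2 * sz \<le> 2 * G * real (card D) + rr"
  proof -
    have "(\<Sum>S\<in>D. 2 * real (card S)) \<le> (\<Sum>S\<in>D. 2 * G + real (card (rem V E S)))"
    proof (rule sum_mono)
      fix S assume "S \<in> D"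
      hence "2 * card S \<le> 2 * upper_domination_number V E + card (rem V E S)" using B_pt[OF sg acyc dS] by blast
      thus "2 * real (card S) \<le> 2 * G + real (card (rem V E S))" unfolding G_def by linarith
    qed
    thus ?thesis unfolding rr_def sz_def by (simp add: sum.distrib sum_distrib_left mult.commute)
  qed
  have l2: "(real n + 2 * g) * real (card D) \<le> 3 * sz" using low cnt by (simp add: algebra_simps)
  have u2: "3 * sz \<le> (real n + 2 * G) * real (card D)" using up cnt by (simp add: algebra_simps)
  have "(real n + 2 * g) / 3 \<le> sz / real (card D)"
    using l2 Npos by (simp add: field_simps)
  moreover have "sz / real (card D) \<le> (real n + 2 * G) / 3"
    using u2 Npos by (simp add: field_simps)
  ultimately show ?thesis unfolding avd_eq g_def G_def by simp
qed

end
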